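(* Fix a nondegenerate triangle $E=E_1E_2E_3$ in the real affine plane. Parallel triangles (triangles $D=D_1D_2D_3$ with $D_iD_j\parallel E_iE_j$) are identified, via their barycentric coordinates $(\delta_1,\delta_2,\delta_3)$, with the points of $\mathbb{R}^3$ with $\delta_1+\delta_2+\delta_3\neq 0$; the space of triangles is $\mathbb{R}^3$, i.e. this set extended by formal elements with $\delta_1+\delta_2+\delta_3=0$. Then the operation $+$ on parallel triangles extends to a commutative and associative operation on the space of triangles, and the resulting group is isomorphic to the additive group $\mathbb{R}^3$.
   Context: Here $d=\delta_1+\delta_2+\delta_3$ is the unique nonzero real such that the homothety of ratio $d$ (translation if $d=1$) maps $D_i$ to $E_i$, and $\delta_i/d$ are the barycentric coordinates (with respect to $E$) of the centroid of $D$. For parallel triangles $A,B$, the pre-sum $C=A\boxplus B$ has vertices $C_k=A_iB_j\cap A_jB_i$ for each permutation $(i,j,k)$ of $(1,2,3)$, and $A+B$ is the point reflection of $C$ in its centroid (defined when $C$ is a nondegenerate triangle in the affine plane). *)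

theory Defs
  imports "HOL-Analysis.Analysis"
begin

text \<open>Points of the real affine plane are vectors in real^2; a triangle is a
  triple of points indexed by the 3-element type 3 (vertices T$1, T$2, T$3).\<close>
type_synonym triangle = "real^2^3"

definition nondeg_tri :: "triangle \<Rightarrow> bool" where
  "nondeg_tri T \<longleftrightarrow> \<not> collinear (range (vec_nth T))"

definition parallel_tri :: "triangle \<Rightarrow> triangle \<Rightarrow> bool" where
  "parallel_tri E D \<longleftrightarrow> nondeg_tri D \<and>
     (\<forall>i j. \<exists>s::real. D$i - D$j = s *\<^sub>R (E$i - E$j))"

definition tri_ratio :: "triangle \<Rightarrow> triangle \<Rightarrow> real" where
  "tri_ratio E D = (THE d. d \<noteq> 0 \<and> (\<exists>w. \<forall>i. E$i = d *\<^sub>R D$i + w))"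

definition centroid :: "triangle \<Rightarrow> real^2" where
  "centroid T = (1/3) *\<^sub>R (\<Sum>i\<in>UNIV. T$i)"

definition bary :: "triangle \<Rightarrow> real^2 \<Rightarrow> real^3" where
  "bary E p = (THE l. (\<Sum>i\<in>UNIV. l$i) = 1 \<and> (\<Sum>i\<in>UNIV. l$i *\<^sub>R E$i) = p)"

definition tri_delta :: "triangle \<Rightarrow> triangle \<Rightarrow> real^3" where
  "tri_delta E D = tri_ratio E D *\<^sub>R bary E (centroid D)"

definition line :: "real^2 \<Rightarrow> real^2 \<Rightarrow> (real^2) set" where
  "line p q = {p + t *\<^sub>R (q - p) | t. True}"

definition is_presum :: "triangle \<Rightarrow> triangle \<Rightarrow> triangle \<Rightarrow> bool" where
  "is_presum A B C \<longleftrightarrow> (\<forall>i j k. distinct [i, j, k] \<longrightarrow>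
      A$i \<noteq> B$j \<and> A$j \<noteq> B$i \<and> line (A$i) (B$j) \<inter> line (A$j) (B$i) = {C$k})"

definition is_tri_sum :: "triangle \<Rightarrow> triangle \<Rightarrow> triangle \<Rightarrow> bool" where
  "is_tri_sum A B S \<longleftrightarrow> (\<exists>C. is_presum A B C \<and> nondeg_tri C \<and>
      S = (\<chi> k. 2 *\<^sub>R centroid C - C$k))"

end

theory Submission
  imports Defs
begin


lemma vec2_eq: "(x::real^2) = y \<longleftrightarrow> x$1 = y$1 \<and> x$2 = y$2"
  by (simp add: vec_eq_iff forall_2)

lemma range3: "range (vec_nth (T::triangle)) = {T$1, T$2, T$3}"
  by (auto simp: UNIV_3)

lemma cross_nz:
  assumes "nondeg_tri E"
  shows "(E$2-E$1)$1 * (E$3-E$1)$2 - (E$2-E$1)$2*(E$3-E$1)$1 \<noteq> 0"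
proof
  define u v where "u = E$2-E$1" and "v = E$3-E$1"
  assume "(E$2-E$1)$1 * (E$3-E$1)$2 - (E$2-E$1)$2*(E$3-E$1)$1 = 0"
  then have h: "u$1 * v$2 = u$2 * v$1" unfolding u_def v_def by simp
  have "collinear {E$1, E$2, E$3}"
  proof (cases "u = 0")
    case True
    then have "E$2 = E$1" unfolding u_def by simp
    moreover have "E$3 = E$1 + 1 *\<^sub>R v" unfolding v_def by simp
    ultimately show ?thesis unfolding collinear_alt
      by (intro exI[of _ "E$1"] exI[of _ v]) (auto intro: exI[of _ 0] exI[of _ 1])
  next
    case False
    obtain k where k: "v = k *\<^sub>R u"
    proof (cases "u$1 = 0")
      case True
      with False have "u$2 \<noteq> 0" by (simp add: vec2_eq)
      then show ?thesis using h True
        by (intro that[of "v$2/u$2"]) (auto simp: vec2_eq field_simps)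
    next
      case F: False
      then show ?thesis using h
        by (intro that[of "v$1/u$1"]) (auto simp: vec2_eq field_simps)
    qed
    have "E$2 = E$1 + 1 *\<^sub>R u" "E$3 = E$1 + k *\<^sub>R u" "E$1 = E$1 + 0 *\<^sub>R u"
      using k unfolding u_def v_def by (auto simp: algebra_simps)
    then show ?thesis unfolding collinear_alt
      by (intro exI[of _ "E$1"] exI[of _ u]) blast
  qed
  then show False using assms unfolding nondeg_tri_def range3 by simp
qed

lemma indep2:
  fixes u v :: "real^2"
  assumes "u$1 * v$2 - u$2 * v$1 \<noteq> 0" "a *\<^sub>R u + b *\<^sub>R v = 0"
  shows "a = 0 \<and> b = 0"
proof -
  have e1: "a * u$1 + b * v$1 = 0" and e2: "a * u$2 + b * v$2 = 0"
    using assms(2) by (auto simp: vec2_eq)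
  have "a * (u$1 * v$2 - u$2 * v$1) = v$2 * (a * u$1 + b * v$1) - v$1 * (a * u$2 + b * v$2)"
    by (simp add: algebra_simps)
  also have "\<dots> = 0" using e1 e2 by simp
  finally have "a = 0" using assms(1) by simp
  moreover have "b * (u$1 * v$2 - u$2 * v$1) = u$1 * (a * u$2 + b * v$2) - u$2 * (a * u$1 + b * v$1)"
    by (simp add: algebra_simps)
  then have "b = 0" using e1 e2 assms(1) by simp
  ultimately show ?thesis by simp
qed
lemma t1: fixes a b c d :: "real^2" assumes "s \<noteq> 0" "a = b + s *\<^sub>R (c - d)"
  shows "(1/s) *\<^sub>R a = (1/s) *\<^sub>R b + (c - d)"
  using assms by (simp add: scaleR_right_distrib)
lemma t2: fixes a b c d :: "real^2" assumes "(1/s) *\<^sub>R a = (1/s) *\<^sub>R b + (c - d)"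
  shows "c = (1/s) *\<^sub>R a + (d - (1/s) *\<^sub>R b)"
  using assms by (simp add: algebra_simps)

lemma nondeg_12: "nondeg_tri D \<Longrightarrow> D$1 \<noteq> D$2"
  unfolding nondeg_tri_def range3 by (metis collinear_2 insert_absorb2)

lemma parallel_homothety:
  assumes E: "nondeg_tri E" and P: "parallel_tri E D"
  shows "\<exists>d w. d \<noteq> 0 \<and> (\<forall>i. E$i = d *\<^sub>R D$i + w)"
proof -
  have PP: "\<forall>i j. \<exists>s::real. D$i - D$j = s *\<^sub>R (E$i - E$j)" using P unfolding parallel_tri_def by blast
  obtain s12 where h12: "D$1 - D$2 = s12 *\<^sub>R (E$1 - E$2)" using PP by blast
  obtain s23 where h23: "D$2 - D$3 = s23 *\<^sub>R (E$2 - E$3)" using PP by blast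
  obtain s13 where h13: "D$1 - D$3 = s13 *\<^sub>R (E$1 - E$3)" using PP by blast
  have "D$1 - D$3 = (D$1 - D$2) + (D$2 - D$3)" by simp
  then have "(s23 - s12) *\<^sub>R (E$2 - E$1) + (s13 - s23) *\<^sub>R (E$3 - E$1) = 0"
    using h12 h23 h13 by (simp add: algebra_simps)
  from indep2[OF cross_nz[OF E] this] have eq: "s12 = s23" "s13 = s23" by auto
  define s where "s = s23"
  have d2: "D$2 = D$1 + s *\<^sub>R (E$2 - E$1)" using h12 eq unfolding s_def by (simp add: algebra_simps)
  have d3: "D$3 = D$1 + s *\<^sub>R (E$3 - E$1)" using h13 eq unfolding s_def by (simp add: algebra_simps)
  have "s \<noteq> 0"
  proof
    assume "s = 0"
    then have "D$2 = D$1" "D$3 = D$1" using d2 d3 by auto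
    then show False using P unfolding parallel_tri_def nondeg_tri_def range3 by simp
  qed
  have di: "\<forall>i. D$i = D$1 + s *\<^sub>R (E$i - E$1)" unfolding forall_3 using d2 d3 by simp
  have "E$i = (1/s) *\<^sub>R D$i + (E$1 - (1/s) *\<^sub>R D$1)" for i
  proof -
    have "(1/s) *\<^sub>R D$i = (1/s) *\<^sub>R D$1 + (E$i - E$1)"
      by (rule t1[OF \<open>s \<noteq> 0\<close> di[rule_format]])
    then show ?thesis by (rule t2)
  qed
  then have "\<forall>i. E$i = (1/s) *\<^sub>R D$i + (E$1 - (1/s) *\<^sub>R D$1)" by blast
  moreover have "1/s \<noteq> 0" using \<open>s \<noteq> 0\<close> by simp
  ultimately show ?thesis by blast
qed

lemma vec3_eq: "(x::real^3) = y \<longleftrightarrow> x$1 = y$1 \<and> x$2 = y$2 \<and> x$3 = y$3"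
  by (simp add: vec_eq_iff forall_3)

lemma tri_ratio_eq:
  assumes "d \<noteq> 0" "\<forall>i. E$i = d *\<^sub>R D$i + w" "D$1 \<noteq> D$2"
  shows "tri_ratio E D = d"
  unfolding tri_ratio_def
proof (rule the_equality)
  show "d \<noteq> 0 \<and> (\<exists>w. \<forall>i. E$i = d *\<^sub>R D$i + w)" using assms by blast
next
  fix d' assume "d' \<noteq> 0 \<and> (\<exists>w. \<forall>i. E$i = d' *\<^sub>R D$i + w)"
  then obtain w' where w': "\<forall>i. E$i = d' *\<^sub>R D$i + w'" by blast
  have "E$1 - E$2 = d *\<^sub>R (D$1 - D$2)" using assms(2) by (simp add: algebra_simps)
  moreover have "E$1 - E$2 = d' *\<^sub>R (D$1 - D$2)" using w' by (simp add: algebra_simps)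
  ultimately have "(d' - d) *\<^sub>R (D$1 - D$2) = 0" by (simp add: algebra_simps)
  then show "d' = d" using assms(3) by simp
qed

lemma centroid_hom:
  assumes "\<forall>i. E$i = d *\<^sub>R D$i + w"
  shows "centroid E = d *\<^sub>R centroid D + w"
proof -
  have "centroid E = (1/3) *\<^sub>R ((d *\<^sub>R D$1 + w) + (d *\<^sub>R D$2 + w) + (d *\<^sub>R D$3 + w))"
    unfolding centroid_def sum_3 using assms by metis
  also have "\<dots> = d *\<^sub>R ((1/3) *\<^sub>R (D$1 + D$2 + D$3)) + w"
    by (simp add: vec2_eq algebra_simps)
  finally show ?thesis unfolding centroid_def sum_3 .
qed

lemma bary_sum_expand:
  fixes E :: triangle and l :: "real^3"
  assumes "l$1 + l$2 + l$3 = 1"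
  shows "l$1 *\<^sub>R E$1 + l$2 *\<^sub>R E$2 + l$3 *\<^sub>R E$3 = E$1 + l$2 *\<^sub>R (E$2 - E$1) + l$3 *\<^sub>R (E$3 - E$1)"
proof -
  have h: "(l$1 + l$2 + l$3) *\<^sub>R E$1 = E$1" using assms by simp
  then show ?thesis by (simp add: algebra_simps)
qed

lemma cramer:
  fixes u v q :: "real^2"
  assumes "u$1 * v$2 - u$2 * v$1 \<noteq> 0"
  shows "((q$1 * v$2 - q$2 * v$1) / (u$1 * v$2 - u$2 * v$1)) *\<^sub>R u
       + ((u$1 * q$2 - u$2 * q$1) / (u$1 * v$2 - u$2 * v$1)) *\<^sub>R v = q"
proof -
  define D where "D = u$1 * v$2 - u$2 * v$1"
  have D: "D \<noteq> 0" using assms D_def by simp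
  have 1: "(q$1 * v$2 - q$2 * v$1) * u$1 + (u$1 * q$2 - u$2 * q$1) * v$1 = q$1 * D"
    unfolding D_def by (simp add: algebra_simps)
  have 2: "(q$1 * v$2 - q$2 * v$1) * u$2 + (u$1 * q$2 - u$2 * q$1) * v$2 = q$2 * D"
    unfolding D_def by (simp add: algebra_simps)
  have "(q$1 * v$2 - q$2 * v$1) / D * u$1 + (u$1 * q$2 - u$2 * q$1) / D * v$1 = q$1"
    using 1 D by (simp add: divide_simps)
  moreover have "(q$1 * v$2 - q$2 * v$1) / D * u$2 + (u$1 * q$2 - u$2 * q$1) / D * v$2 = q$2"
    using 2 D by (simp add: divide_simps)
  ultimately show ?thesis unfolding D_def[symmetric] by (simp add: vec2_eq)
qed

lemma bary_unique:
  fixes l m :: "real^3"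
  assumes E: "nondeg_tri E"
    and l: "l$1 + l$2 + l$3 = 1" "l$1 *\<^sub>R E$1 + l$2 *\<^sub>R E$2 + l$3 *\<^sub>R E$3 = p"
    and m: "m$1 + m$2 + m$3 = 1" "m$1 *\<^sub>R E$1 + m$2 *\<^sub>R E$2 + m$3 *\<^sub>R E$3 = p"
  shows "l = m"
proof -
  have "E$1 + l$2 *\<^sub>R (E$2 - E$1) + l$3 *\<^sub>R (E$3 - E$1) = E$1 + m$2 *\<^sub>R (E$2 - E$1) + m$3 *\<^sub>R (E$3 - E$1)"
    using bary_sum_expand[OF l(1)] bary_sum_expand[OF m(1)] l(2) m(2) by metis
  then have "(l$2 - m$2) *\<^sub>R (E$2 - E$1) + (l$3 - m$3) *\<^sub>R (E$3 - E$1) = 0"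
    by (simp add: algebra_simps)
  from indep2[OF cross_nz[OF E] this] have "l$2 = m$2" "l$3 = m$3" by auto
  moreover then have "l$1 = m$1" using l(1) m(1) by simp
  ultimately show ?thesis by (simp add: vec3_eq)
qed

lemma bary_exists:
  assumes E: "nondeg_tri E"
  shows "\<exists>l::real^3. l$1 + l$2 + l$3 = 1 \<and> l$1 *\<^sub>R E$1 + l$2 *\<^sub>R E$2 + l$3 *\<^sub>R E$3 = p"
proof -
  define u v q where "u = E$2 - E$1" and "v = E$3 - E$1" and "q = p - E$1"
  have D: "u$1 * v$2 - u$2 * v$1 \<noteq> 0" using cross_nz[OF E] unfolding u_def v_def .
  define a where "a = (q$1 * v$2 - q$2 * v$1) / (u$1 * v$2 - u$2 * v$1)"
  define b where "b = (u$1 * q$2 - u$2 * q$1) / (u$1 * v$2 - u$2 * v$1)"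
  have ab: "a *\<^sub>R u + b *\<^sub>R v = q" unfolding a_def b_def by (rule cramer[OF D])
  define l :: "real^3" where "l = vector [1 - a - b, a, b]"
  have l1: "l$1 + l$2 + l$3 = 1" unfolding l_def by simp
  have "l$1 *\<^sub>R E$1 + l$2 *\<^sub>R E$2 + l$3 *\<^sub>R E$3 = E$1 + a *\<^sub>R u + b *\<^sub>R v"
    unfolding bary_sum_expand[OF l1] unfolding l_def u_def v_def by simp
  also have "\<dots> = p" using ab unfolding q_def by (simp add: algebra_simps)
  finally show ?thesis using l1 by blast
qed

lemma bary_sum_UNIV: "(\<Sum>i\<in>UNIV. l$i *\<^sub>R (E::triangle)$i) = l$1 *\<^sub>R E$1 + l$2 *\<^sub>R E$2 + l$3 *\<^sub>R E$3"
  by (rule sum_3)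

lemma bary_props:
  assumes E: "nondeg_tri E"
  shows "bary E p $1 + bary E p $2 + bary E p $3 = 1 \<and>
    bary E p $1 *\<^sub>R E$1 + bary E p $2 *\<^sub>R E$2 + bary E p $3 *\<^sub>R E$3 = p"
proof -
  have "\<exists>!l. (\<Sum>i\<in>UNIV. l$i) = 1 \<and> (\<Sum>i\<in>UNIV. l$i *\<^sub>R E$i) = p"
    unfolding sum_3 using bary_exists[OF E] bary_unique[OF E] by blast
  from theI'[OF this] show ?thesis unfolding bary_def sum_3 .
qed

lemma bary_eq:
  fixes l :: "real^3"
  assumes E: "nondeg_tri E" and "l$1 + l$2 + l$3 = 1" "l$1 *\<^sub>R E$1 + l$2 *\<^sub>R E$2 + l$3 *\<^sub>R E$3 = p"
  shows "bary E p = l"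
  using bary_unique[OF E _ _ assms(2,3)] bary_props[OF E] by blast

lemma nondeg_hom:
  assumes "nondeg_tri E" "c \<noteq> 0" "\<forall>i. E$i = c *\<^sub>R D$i + w"
  shows "nondeg_tri D"
proof -
  have "collinear (range (vec_nth E))" if "collinear (range (vec_nth D))"
  proof -
    from that obtain z where z: "\<forall>x\<in>range (vec_nth D). \<forall>y\<in>range (vec_nth D). \<exists>k. x - y = k *\<^sub>R z"
      unfolding collinear_def by blast
    have "\<exists>k. E$i - E$j = k *\<^sub>R z" for i j
    proof -
      obtain k where "D$i - D$j = k *\<^sub>R z" using z by blast
      then have "E$i - E$j = (c * k) *\<^sub>R z" using assms(3)
        by (metis add_diff_cancel_right scaleR_right_diff_distrib scaleR_scaleR)
      then show ?thesis by blast
    qed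
    then show ?thesis unfolding collinear_def by blast
  qed
  then show ?thesis using assms(1) unfolding nondeg_tri_def by blast
qed


lemma in_line: "x \<in> line p q \<longleftrightarrow> (\<exists>t. x = p + t *\<^sub>R (q - p))"
  unfolding line_def by blast

lemma lincomb:
  fixes x y :: "real^2"
  assumes "s = a + b" "s \<noteq> 0"
  shows "s *\<^sub>R (x + (b/s) *\<^sub>R (y - x)) = a *\<^sub>R x + b *\<^sub>R y"
proof -
  have "s * (b/s) = b" using assms(2) by simp
  then have "s *\<^sub>R (x + (b/s) *\<^sub>R (y - x)) = s *\<^sub>R x + b *\<^sub>R (y - x)"
    by (simp add: scaleR_right_distrib)
  also have "\<dots> = a *\<^sub>R x + b *\<^sub>R y" using assms(1) by (simp add: algebra_simps)
  finally show ?thesis .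
qed

lemma presum_point:
  fixes A B E :: triangle
  assumes hA: "\<forall>x. E$x = dA *\<^sub>R A$x + wA" and hB: "\<forall>x. E$x = dB *\<^sub>R B$x + wB"
    and dA: "dA \<noteq> 0" and dB: "dB \<noteq> 0" and ne: "A$i \<noteq> B$j"
    and L: "line (A$i) (B$j) \<inter> line (A$j) (B$i) = {c}"
  shows "dA + dB \<noteq> 0 \<and> (dA + dB) *\<^sub>R c = E$i + E$j - wA - wB"
proof -
  have a: "dA *\<^sub>R A$x = E$x - wA" for x using hA by (metis add_diff_cancel_right')
  have b: "dB *\<^sub>R B$x = E$x - wB" for x using hB by (metis add_diff_cancel_right')
  have s: "dA + dB \<noteq> 0"
  proof
    assume "dA + dB = 0"
    then have "dB = - dA" by simp
    then have b': "dA *\<^sub>R B$x = - (E$x - wB)" for x using b[of x] by (simp add: minus_equation_iff[of "dA *\<^sub>R B$x"])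
    have "dA *\<^sub>R (A$i - B$j) = (E$i - wA) + (E$j - wB)"
      by (simp add: scaleR_right_diff_distrib a b')
    moreover have "dA *\<^sub>R (A$j - B$i) = (E$j - wA) + (E$i - wB)"
      by (simp add: scaleR_right_diff_distrib a b')
    moreover have "(E$i - wA) + (E$j - wB) = (E$j - wA) + (E$i - wB)" by (simp add: algebra_simps)
    ultimately have "dA *\<^sub>R (A$i - B$j) = dA *\<^sub>R (A$j - B$i)" by simp
    then have r: "A$j - B$i = A$i - B$j" using dA by simp
    have "c \<in> line (A$i) (B$j)" "c \<in> line (A$j) (B$i)" using L by auto
    then obtain t t' where t: "c = A$i + t *\<^sub>R (B$j - A$i)" and t': "c = A$j + t' *\<^sub>R (B$i - A$j)"
      unfolding in_line by blast
    have "c - (A$i - B$j) = A$i + (t + 1) *\<^sub>R (B$j - A$i)" using t by (simp add: algebra_simps)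
    then have l1: "c - (A$i - B$j) \<in> line (A$i) (B$j)" unfolding in_line by blast
    have "c - (A$i - B$j) = A$j + (t' + 1) *\<^sub>R (B$i - A$j)"
    proof -
      have "c - (A$i - B$j) = c - (A$j - B$i)" using r by simp
      also have "\<dots> = A$j + (t' + 1) *\<^sub>R (B$i - A$j)"
        using t' by (simp add: algebra_simps)
      finally show ?thesis .
    qed
    then have "c - (A$i - B$j) \<in> line (A$j) (B$i)" unfolding in_line by blast
    with l1 have "c - (A$i - B$j) = c" using L by blast
    then show False using ne by simp
  qed
  define M where "M = A$i + (dB / (dA + dB)) *\<^sub>R (B$j - A$i)"
  have M1: "(dA + dB) *\<^sub>R M = E$i + E$j - wA - wB"
  proof -
    have "(dA + dB) *\<^sub>R M = dA *\<^sub>R A$i + dB *\<^sub>R B$j" unfolding M_def by (rule lincomb[OF refl s])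
    also have "\<dots> = (E$i - wA) + (E$j - wB)" by (simp only: a b)
    also have "\<dots> = E$i + E$j - wA - wB" by (simp add: algebra_simps)
    finally show ?thesis .
  qed
  define M' where "M' = A$j + (dB / (dA + dB)) *\<^sub>R (B$i - A$j)"
  have M2: "(dA + dB) *\<^sub>R M' = E$i + E$j - wA - wB"
  proof -
    have "(dA + dB) *\<^sub>R M' = dA *\<^sub>R A$j + dB *\<^sub>R B$i" unfolding M'_def by (rule lincomb[OF refl s])
    also have "\<dots> = (E$j - wA) + (E$i - wB)" by (simp only: a b)
    also have "\<dots> = E$i + E$j - wA - wB" by (simp add: algebra_simps)
    finally show ?thesis .
  qed
  have "M = M'" using M1 M2 s by (metis scaleR_left_imp_eq)
  have "M \<in> line (A$i) (B$j)" unfolding M_def in_line by blast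
  moreover have "M \<in> line (A$j) (B$i)" unfolding \<open>M = M'\<close> M'_def in_line by blast
  ultimately have "M = c" using L by blast
  then show ?thesis using s M1 by simp
qed


lemma lin3:
  fixes x y :: "real^3" and E :: triangle
  shows "(a *\<^sub>R x + b *\<^sub>R y)$1 *\<^sub>R E$1 + (a *\<^sub>R x + b *\<^sub>R y)$2 *\<^sub>R E$2 + (a *\<^sub>R x + b *\<^sub>R y)$3 *\<^sub>R E$3
    = a *\<^sub>R (x$1 *\<^sub>R E$1 + x$2 *\<^sub>R E$2 + x$3 *\<^sub>R E$3) + b *\<^sub>R (y$1 *\<^sub>R E$1 + y$2 *\<^sub>R E$2 + y$3 *\<^sub>R E$3)"
  by (simp add: algebra_simps)

lemma distinct3: "distinct [1,2,3::3]" "distinct [1,3,2::3]" "distinct [2,3,1::3]"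
  by simp_all

lemma sum_main:
  fixes A B S :: triangle
  assumes E: "nondeg_tri E" and pA: "parallel_tri E A" and pB: "parallel_tri E B"
    and sum: "is_tri_sum A B S"
  shows "parallel_tri E S \<and> tri_delta E S = tri_delta E A + tri_delta E B"
proof -
  obtain C where PC: "is_presum A B C" and SC: "S = (\<chi> k. 2 *\<^sub>R centroid C - C$k)"
    using sum unfolding is_tri_sum_def by blast
  obtain dA wA where dA: "dA \<noteq> 0" and hA: "\<forall>x. E$x = dA *\<^sub>R A$x + wA"
    using parallel_homothety[OF E pA] by blast
  obtain dB wB where dB: "dB \<noteq> 0" and hB: "\<forall>x. E$x = dB *\<^sub>R B$x + wB"
    using parallel_homothety[OF E pB] by blast
  define s where "s = dA + dB"
  have P3: "A$1 \<noteq> B$2 \<and> line (A$1) (B$2) \<inter> line (A$2) (B$1) = {C$3}"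
    using PC distinct3(1) unfolding is_presum_def by blast
  have P2: "A$1 \<noteq> B$3 \<and> line (A$1) (B$3) \<inter> line (A$3) (B$1) = {C$2}"
    using PC distinct3(2) unfolding is_presum_def by blast
  have P1: "A$2 \<noteq> B$3 \<and> line (A$2) (B$3) \<inter> line (A$3) (B$2) = {C$1}"
    using PC distinct3(3) unfolding is_presum_def by blast
  have c3: "s *\<^sub>R C$3 = E$1 + E$2 - wA - wB" and s: "s \<noteq> 0"
    using presum_point[OF hA hB dA dB] P3 unfolding s_def by blast+
  have c2: "s *\<^sub>R C$2 = E$1 + E$3 - wA - wB"
    using presum_point[OF hA hB dA dB] P2 unfolding s_def by blast
  have c1: "s *\<^sub>R C$1 = E$2 + E$3 - wA - wB"
    using presum_point[OF hA hB dA dB] P1 unfolding s_def by blast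
  define wS where "wS = (wA + wB) - (1/3) *\<^sub>R (E$1 + E$2 + E$3)"
  have key: "s *\<^sub>R S$k = 2 *\<^sub>R ((1/3) *\<^sub>R (s *\<^sub>R C$1 + s *\<^sub>R C$2 + s *\<^sub>R C$3)) - s *\<^sub>R C$k" for k
    unfolding SC centroid_def sum_3 by (simp add: algebra_simps)
  have hS: "\<forall>k. E$k = s *\<^sub>R S$k + wS"
    unfolding forall_3 key c1 c2 c3 wS_def by (simp add: vec2_eq algebra_simps)
  have ndS: "nondeg_tri S" using nondeg_hom[OF E s hS] .
  have parS: "parallel_tri E S"
    unfolding parallel_tri_def
  proof (intro conjI ndS allI)
    fix i j
    have "E$i - E$j = s *\<^sub>R (S$i - S$j)" using hS by (simp add: algebra_simps)
    then have "S$i - S$j = (1/s) *\<^sub>R (E$i - E$j)" using s by simp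
    then show "\<exists>t::real. S$i - S$j = t *\<^sub>R (E$i - E$j)" by blast
  qed
  have rA: "tri_ratio E A = dA" by (rule tri_ratio_eq[OF dA hA nondeg_12]) (use pA parallel_tri_def in blast)
  have rB: "tri_ratio E B = dB" by (rule tri_ratio_eq[OF dB hB nondeg_12]) (use pB parallel_tri_def in blast)
  have rS: "tri_ratio E S = s" by (rule tri_ratio_eq[OF s hS nondeg_12[OF ndS]])
  have gA: "centroid E = dA *\<^sub>R centroid A + wA" by (rule centroid_hom[OF hA])
  have gB: "centroid E = dB *\<^sub>R centroid B + wB" by (rule centroid_hom[OF hB])
  have gS: "centroid E = s *\<^sub>R centroid S + wS" by (rule centroid_hom[OF hS])
  define lA where "lA = bary E (centroid A)"
  define lB where "lB = bary E (centroid B)"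
  define l where "l = (1/s) *\<^sub>R (dA *\<^sub>R lA + dB *\<^sub>R lB)"
  have bA: "lA$1 + lA$2 + lA$3 = 1" "lA$1 *\<^sub>R E$1 + lA$2 *\<^sub>R E$2 + lA$3 *\<^sub>R E$3 = centroid A"
    using bary_props[OF E] unfolding lA_def by blast+
  have bB: "lB$1 + lB$2 + lB$3 = 1" "lB$1 *\<^sub>R E$1 + lB$2 *\<^sub>R E$2 + lB$3 *\<^sub>R E$3 = centroid B"
    using bary_props[OF E] unfolding lB_def by blast+
  have l_alt: "l = (dA / s) *\<^sub>R lA + (dB / s) *\<^sub>R lB" unfolding l_def by (simp add: algebra_simps)
  have l1: "l$1 + l$2 + l$3 = 1"
  proof -
    have "l$1 + l$2 + l$3 = (1/s) * (dA * (lA$1 + lA$2 + lA$3) + dB * (lB$1 + lB$2 + lB$3))"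
      unfolding l_def by (simp add: algebra_simps)
    also have "\<dots> = 1" using bA(1) bB(1) s unfolding s_def by simp
    finally show ?thesis .
  qed
  have l2: "l$1 *\<^sub>R E$1 + l$2 *\<^sub>R E$2 + l$3 *\<^sub>R E$3 = centroid S"
  proof -
    have "l$1 *\<^sub>R E$1 + l$2 *\<^sub>R E$2 + l$3 *\<^sub>R E$3 = (dA / s) *\<^sub>R centroid A + (dB / s) *\<^sub>R centroid B"
      unfolding l_alt lin3 bA(2) bB(2) ..
    also have "\<dots> = (1/s) *\<^sub>R (dA *\<^sub>R centroid A + dB *\<^sub>R centroid B)"
      by (simp add: algebra_simps)
    also have "dA *\<^sub>R centroid A + dB *\<^sub>R centroid B = s *\<^sub>R centroid S"
    proof -
      have "dA *\<^sub>R centroid A + dB *\<^sub>R centroid B = 2 *\<^sub>R centroid E - (wA + wB)"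
      proof -
        have h: "2 *\<^sub>R centroid E = (dA *\<^sub>R centroid A + wA) + (dB *\<^sub>R centroid B + wB)"
          using gA gB by (metis scaleR_2)
        show ?thesis unfolding h by (simp add: algebra_simps)
      qed
      moreover have "centroid E = (1/3) *\<^sub>R (E$1 + E$2 + E$3)" unfolding centroid_def sum_3 ..
      moreover have "s *\<^sub>R centroid S = centroid E - wS" using gS by simp
      ultimately show ?thesis unfolding wS_def by (simp add: vec2_eq algebra_simps)
    qed
    also have "(1/s) *\<^sub>R (s *\<^sub>R centroid S) = centroid S" using s by simp
    finally show ?thesis .
  qed
  have "bary E (centroid S) = l" by (rule bary_eq[OF E l1 l2])
  then have "tri_delta E S = s *\<^sub>R l" unfolding tri_delta_def rS by simp
  also have "\<dots> = dA *\<^sub>R lA + dB *\<^sub>R lB" unfolding l_def using s by simp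
  also have "\<dots> = tri_delta E A + tri_delta E B" unfolding tri_delta_def rA rB lA_def lB_def ..
  finally show ?thesis using parS by simp
qed


theorem corollary1:
  fixes E :: triangle
  assumes "nondeg_tri E"
  shows "\<exists>op :: real^3 \<Rightarrow> real^3 \<Rightarrow> real^3.
           (\<forall>x y. op x y = op y x) \<and>
           (\<forall>x y z. op (op x y) z = op x (op y z)) \<and>
           (\<forall>A B S. parallel_tri E A \<and> parallel_tri E B \<and> is_tri_sum A B S \<longrightarrow>
               parallel_tri E S \<and> tri_delta E S = op (tri_delta E A) (tri_delta E B)) \<and>
           (\<exists>\<phi> :: real^3 \<Rightarrow> real^3. bij \<phi> \<and> (\<forall>x y. \<phi> (op x y) = \<phi> x + \<phi> y))"
  proof (intro exI[of _ "(+)"] conjI allI impI)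
  show "\<exists>\<phi> :: real^3 \<Rightarrow> real^3. bij \<phi> \<and> (\<forall>x y. \<phi> (x + y) = \<phi> x + \<phi> y)"
    by (intro exI[of _ id]) simp
qed (use sum_main[OF assms] in \<open>auto simp: algebra_simps\<close>)

end
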